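(* There is a universal constant $c>0$ such that the following holds. Let $\varepsilon\ge 0,\delta\ge 0$ with $\varepsilon+\delta<c$. Let $A$ be any $(\varepsilon,\delta)$-differentially private mechanism (with respect to user-level adjacency) whose output depends on the users' data only through the vector of summed counts $N=[N_1,\dots,N_k]$. Then \[ S^A_{m,\alpha,\varepsilon,\delta}=\Omega\left(\frac{k}{m\alpha^2}+\frac{k}{\alpha(\varepsilon+\delta)}\right). \]
   Context: Let $[k]=\{1,\dots,k\}$ and let $\Delta_k$ be the set of probability distributions on $[k]$. There are $s$ users; each user $u$ holds $m$ samples $X_1(u),\dots,X_m(u)$, and all $sm$ samples are i.i.d. from an unknown $p\in\Delta_k$. For a user $u$, $N_i(u)$ is the number of samples of user $u$ equal to $i$, and $N_i=\sum_u N_i(u)$. An algorithm $A$ maps the users' data to an estimate $\hat p^A\in\Delta_k$, possibly randomized. Two datasets are adjacent if they differ only in the data of a single user. $A$ is $(\varepsilon,\delta)$-differentially private if for all adjacent datasets $D,D'$ and all measurable sets $S$ of outputs, $\Pr[A(D)\in S]\le e^{\varepsilon}\Pr[A(D')\in S]+\delta$. Let $L(A,s,m,p)=\mathbb{E}\left[\sum_{i=1}^k|p_i-\hat p^A_i|\right]$, the expectation being over the samples and the algorithm's randomness. The user complexity is $S^A_{m,\alpha,\varepsilon,\delta}=\min\{s:\sup_{p\in\Delta_k}L(A,s,m,p)\le\alpha\}$. The constant in $\Omega$ is universal. *)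

theory Defs
  imports "HOL-Probability.Probability"
begin

text \<open>The alphabet [k] is rendered as {..<k} (0-based labels).
  A dataset of s users with m samples each is D :: nat => nat => nat,
  where D u j is the j-th sample (j < m) of user u (u < s); other entries are irrelevant.\<close>

definition valid_dataset :: "nat \<Rightarrow> nat \<Rightarrow> nat \<Rightarrow> (nat \<Rightarrow> nat \<Rightarrow> nat) \<Rightarrow> bool" where
  "valid_dataset k s m D \<longleftrightarrow> (\<forall>u<s. \<forall>j<m. D u j < k)"

definition counts :: "nat \<Rightarrow> nat \<Rightarrow> (nat \<Rightarrow> nat \<Rightarrow> nat) \<Rightarrow> nat \<Rightarrow> nat" where
  "counts s m D i = card {(u, j). u < s \<and> j < m \<and> D u j = i}"

definition user_adjacent :: "nat \<Rightarrow> nat \<Rightarrow> (nat \<Rightarrow> nat \<Rightarrow> nat) \<Rightarrow> (nat \<Rightarrow> nat \<Rightarrow> nat) \<Rightarrow> bool" where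
  "user_adjacent s m D D' \<longleftrightarrow> (\<exists>u<s. \<forall>v<s. \<forall>j<m. v \<noteq> u \<longrightarrow> D v j = D' v j)"

definition out_space :: "nat \<Rightarrow> (nat \<Rightarrow> real) measure" where
  "out_space k = PiM {..<k} (\<lambda>_. borel)"

definition prob_simplex :: "nat \<Rightarrow> (nat \<Rightarrow> real) set" where
  "prob_simplex k = {x. (\<forall>i<k. 0 \<le> x i) \<and> (\<Sum>i<k. x i) = 1}"

text \<open>A mechanism depending on the data only through the counts: for each number of
  users s and each count vector N, a probability distribution of the estimate,
  supported on the simplex.\<close>
definition valid_count_mechanism ::
  "nat \<Rightarrow> (nat \<Rightarrow> (nat \<Rightarrow> nat) \<Rightarrow> (nat \<Rightarrow> real) measure) \<Rightarrow> bool" where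
  "valid_count_mechanism k M \<longleftrightarrow>
     (\<forall>s N. prob_space (M s N) \<and> sets (M s N) = sets (out_space k)
            \<and> space (M s N) = space (out_space k)
            \<and> (AE x in M s N. x \<in> prob_simplex k))"

definition count_mechanism_dp ::
  "nat \<Rightarrow> nat \<Rightarrow> (nat \<Rightarrow> (nat \<Rightarrow> nat) \<Rightarrow> (nat \<Rightarrow> real) measure) \<Rightarrow> real \<Rightarrow> real \<Rightarrow> bool" where
  "count_mechanism_dp k m M \<epsilon> \<delta> \<longleftrightarrow>
     (\<forall>s D D'. valid_dataset k s m D \<and> valid_dataset k s m D' \<and> user_adjacent s m D D' \<longrightarrow>
        (\<forall>S\<in>sets (out_space k). measure (M s (counts s m D)) S
                          \<le> exp \<epsilon> * measure (M s (counts s m D')) S + \<delta>))"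

definition sample_data :: "nat \<Rightarrow> nat \<Rightarrow> nat pmf \<Rightarrow> (nat \<Rightarrow> nat \<Rightarrow> nat) pmf" where
  "sample_data s m p = Pi_pmf {..<s} (\<lambda>_. 0) (\<lambda>_. Pi_pmf {..<m} 0 (\<lambda>_. p))"

definition loss ::
  "nat \<Rightarrow> (nat \<Rightarrow> (nat \<Rightarrow> nat) \<Rightarrow> (nat \<Rightarrow> real) measure) \<Rightarrow> nat \<Rightarrow> nat \<Rightarrow> nat pmf \<Rightarrow> real" where
  "loss k M s m p = measure_pmf.expectation (sample_data s m p)
     (\<lambda>D. \<integral>x. (\<Sum>i<k. \<bar>pmf p i - x i\<bar>) \<partial>(M s (counts s m D)))"

end

theory Submission
  imports Defs
begin

lemma sum_pairs: "(\<Sum>x<2*h. g x) = (\<Sum>i<h. g (2*i) + g (2*i+1))" for g :: "nat \<Rightarrow> real"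
  by (induction h) (simp_all add: lessThan_Suc)

lemma sqrt_prod_real: "finite A \<Longrightarrow> sqrt (\<Prod>a\<in>A. f a) = (\<Prod>a\<in>A. sqrt (f a))"
  by (induction A rule: finite_induct) (simp_all add: real_sqrt_mult)

lemma bc_Pi:
  fixes P Q :: "'a \<Rightarrow> 'b pmf"
  assumes A: "finite A" and X: "finite X"
  shows "(\<Sum>f\<in>PiE_dflt A d (\<lambda>_. X). sqrt (pmf (Pi_pmf A d P) f) * sqrt (pmf (Pi_pmf A d Q) f))
         = (\<Prod>a\<in>A. \<Sum>y\<in>X. sqrt (pmf (P a) y) * sqrt (pmf (Q a) y))"
proof -
  define e where "e = (\<lambda>h x. if x \<in> A then h x else d)"
  have img: "e ` PiE A (\<lambda>_. X) = PiE_dflt A d (\<lambda>_. X)"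
    unfolding e_def by (rule dflt_image_PiE)
  have inj: "inj_on e (PiE A (\<lambda>_. X))"
  proof (rule inj_onI)
    fix g1 g2 assume g: "g1 \<in> PiE A (\<lambda>_. X)" "g2 \<in> PiE A (\<lambda>_. X)" "e g1 = e g2"
    show "g1 = g2"
    proof
      fix x show "g1 x = g2 x"
      proof (cases "x \<in> A")
        case True then show ?thesis using fun_cong[OF g(3), of x] by (simp add: e_def)
      next
        case False then show ?thesis using g(1,2) by (simp add: PiE_def extensional_def)
      qed
    qed
  qed
  have pe: "pmf (Pi_pmf A d R) (e g) = (\<Prod>a\<in>A. pmf (R a) (g a))" for R :: "'a \<Rightarrow> 'b pmf" and g
    using A by (simp add: pmf_Pi e_def)
  have "(\<Sum>f\<in>PiE_dflt A d (\<lambda>_. X). sqrt (pmf (Pi_pmf A d P) f) * sqrt (pmf (Pi_pmf A d Q) f))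
      = (\<Sum>g\<in>PiE A (\<lambda>_. X). sqrt (pmf (Pi_pmf A d P) (e g)) * sqrt (pmf (Pi_pmf A d Q) (e g)))"
    by (subst img[symmetric], subst sum.reindex[OF inj]) simp
  also have "\<dots> = (\<Sum>g\<in>PiE A (\<lambda>_. X). \<Prod>a\<in>A. sqrt (pmf (P a) (g a)) * sqrt (pmf (Q a) (g a)))"
    by (simp add: pe sqrt_prod_real[OF A] prod.distrib)
  also have "\<dots> = (\<Prod>a\<in>A. \<Sum>y\<in>X. sqrt (pmf (P a) y) * sqrt (pmf (Q a) y))"
    by (rule prod_sum_PiE[symmetric]) (use A X in auto)
  finally show ?thesis .
qed

lemma lecam:
  fixes P Q :: "'a pmf"
  assumes X: "finite X" "set_pmf P \<subseteq> X" "set_pmf Q \<subseteq> X"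
    and phi: "\<And>x. 0 \<le> \<phi> x" "\<And>x. \<phi> x \<le> 1"
    and beta: "\<beta> \<le> (\<Sum>x\<in>X. sqrt (pmf P x) * sqrt (pmf Q x))" "0 < \<beta>"
  shows "\<beta>^2/2 \<le> (\<Sum>x\<in>X. pmf P x * \<phi> x) + (\<Sum>x\<in>X. pmf Q x * (1 - \<phi> x))"
proof -
  let ?mn = "\<lambda>x. min (pmf P x) (pmf Q x)"
  have pt: "sqrt (pmf P x) * sqrt (pmf Q x) \<le> ?mn x / \<beta> + \<beta> * (pmf P x + pmf Q x) / 4" for x
  proof -
    define u where "u = sqrt (pmf P x)"
    define v where "v = sqrt (pmf Q x)"
    have u: "0 \<le> u" "u^2 = pmf P x" and v: "0 \<le> v" "v^2 = pmf Q x" by (simp_all add: u_def v_def)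
    have key: "u * v \<le> (min (u^2) (v^2)) / \<beta> + \<beta> * (u^2 + v^2) / 4"
    proof (cases "u \<le> v")
      case True
      have "u^2 \<le> v^2" by (rule power_mono[OF True u(1)])
      then have m: "min (u^2) (v^2) = u^2" by simp
      have "4 * \<beta> * (u * v) \<le> 4 * u^2 + \<beta>^2 * (u^2 + v^2)"
      proof -
        have e: "(2 * u - \<beta> * v)^2 = 4 * u^2 - 4 * \<beta> * (u * v) + \<beta>^2 * v^2" by (simp add: power2_eq_square algebra_simps)
        have "0 \<le> (2 * u - \<beta> * v)^2" by simp
        moreover have "0 \<le> \<beta>^2 * u^2" by simp
        moreover have "\<beta>^2 * (u^2 + v^2) = \<beta>^2 * u^2 + \<beta>^2 * v^2" by (simp add: distrib_left)
        ultimately show ?thesis using e by linarith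
      qed
      then show ?thesis unfolding m using beta(2) by (simp add: field_simps power2_eq_square)
    next
      case False
      have "v^2 \<le> u^2" using False v(1) by (intro power_mono) auto
      then have m: "min (u^2) (v^2) = v^2" by simp
      have "4 * \<beta> * (u * v) \<le> 4 * v^2 + \<beta>^2 * (u^2 + v^2)"
      proof -
        have e: "(2 * v - \<beta> * u)^2 = 4 * v^2 - 4 * \<beta> * (u * v) + \<beta>^2 * u^2" by (simp add: power2_eq_square algebra_simps)
        have "0 \<le> (2 * v - \<beta> * u)^2" by simp
        moreover have "0 \<le> \<beta>^2 * v^2" by simp
        moreover have "\<beta>^2 * (u^2 + v^2) = \<beta>^2 * u^2 + \<beta>^2 * v^2" by (simp add: distrib_left)
        ultimately show ?thesis using e by linarith
      qed
      then show ?thesis unfolding m using beta(2) by (simp add: field_simps power2_eq_square)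
    qed
    then show ?thesis using u v by (simp add: u_def v_def)
  qed
  have sP: "(\<Sum>x\<in>X. pmf P x) = 1" and sQ: "(\<Sum>x\<in>X. pmf Q x) = 1"
    using X by (simp_all add: sum_pmf_eq_1)
  have "\<beta> \<le> (\<Sum>x\<in>X. ?mn x / \<beta> + \<beta> * (pmf P x + pmf Q x) / 4)"
    using beta(1) sum_mono[of X _ "\<lambda>x. ?mn x / \<beta> + \<beta> * (pmf P x + pmf Q x) / 4", OF pt] by linarith
  also have "\<dots> = (\<Sum>x\<in>X. ?mn x) / \<beta> + \<beta> * ((\<Sum>x\<in>X. pmf P x) + (\<Sum>x\<in>X. pmf Q x)) / 4"
    by (simp add: sum.distrib sum_divide_distrib[symmetric] sum_distrib_left[symmetric])
  finally have "\<beta> \<le> (\<Sum>x\<in>X. ?mn x) / \<beta> + \<beta> / 2" using sP sQ by simp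
  then have "\<beta>^2/2 \<le> (\<Sum>x\<in>X. ?mn x)" using beta(2) by (simp add: field_simps power2_eq_square)
  also have "\<dots> \<le> (\<Sum>x\<in>X. pmf P x * \<phi> x + pmf Q x * (1 - \<phi> x))"
  proof (rule sum_mono)
    fix x
    have "?mn x * \<phi> x + ?mn x * (1 - \<phi> x) \<le> pmf P x * \<phi> x + pmf Q x * (1 - \<phi> x)"
      using phi[of x] by (intro add_mono mult_right_mono) auto
    then show "?mn x \<le> pmf P x * \<phi> x + pmf Q x * (1 - \<phi> x)" by (simp add: algebra_simps)
  qed
  finally show ?thesis by (simp add: sum.distrib)
qed

lemma pmf_embed_finite:
  fixes f :: "'a \<Rightarrow> real"
  assumes A: "finite A" and nn: "\<And>x. 0 \<le> f x" and z: "\<And>x. x \<notin> A \<Longrightarrow> f x = 0" and s: "sum f A = 1"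
  shows "pmf (embed_pmf f) x = f x"
proof (rule pmf_embed_pmf)
  show "0 \<le> f x" for x by (rule nn)
  have "(\<integral>\<^sup>+x. ennreal (f x) \<partial>count_space UNIV) = (\<Sum>x\<in>A. ennreal (f x))"
    by (rule nn_integral_count_space') (use A z in auto)
  also have "\<dots> = ennreal (sum f A)" using nn by simp
  finally show "(\<integral>\<^sup>+x. ennreal (f x) \<partial>count_space UNIV) = 1" using s by simp
qed

definition sg :: "nat set \<Rightarrow> nat \<Rightarrow> real" where "sg S i = (if i \<in> S then 1 else -1)"

definition pv :: "nat \<Rightarrow> real \<Rightarrow> nat set \<Rightarrow> nat \<Rightarrow> real" where
  "pv h \<gamma> S x = (if x < 2*h then (1 + \<gamma> * sg S (x div 2) * (if even x then 1 else -1)) / (2*h) else 0)"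

definition PP :: "nat \<Rightarrow> real \<Rightarrow> nat set \<Rightarrow> nat pmf" where "PP h \<gamma> S = embed_pmf (pv h \<gamma> S)"

definition wv :: "nat \<Rightarrow> nat \<Rightarrow> real \<Rightarrow> nat set \<Rightarrow> nat \<Rightarrow> nat \<Rightarrow> real" where
  "wv k h \<gamma> S i x = (if x < 2*h then (if x div 2 = i then (1-\<gamma>)/(2*h) else pv h \<gamma> S x)
                      else if x = k then \<gamma>/h else 0)"

definition WW :: "nat \<Rightarrow> nat \<Rightarrow> real \<Rightarrow> nat set \<Rightarrow> nat \<Rightarrow> nat pmf" where
  "WW k h \<gamma> S i = embed_pmf (wv k h \<gamma> S i)"

lemma pv_even: "i < h \<Longrightarrow> pv h \<gamma> S (2*i) = (1 + \<gamma> * sg S i) / (2*h)"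
  by (simp add: pv_def)
lemma pv_odd: "i < h \<Longrightarrow> pv h \<gamma> S (2*i+1) = (1 - \<gamma> * sg S i) / (2*h)"
  by (simp add: pv_def)
lemma pv_odd': "i < h \<Longrightarrow> pv h \<gamma> S (Suc (2*i)) = (1 - \<gamma> * sg S i) / (2*h)"
  by (simp add: pv_def)

lemma pv_pair: assumes "j < h" shows "pv h \<gamma> S (2*j) + pv h \<gamma> S (Suc (2*j)) = 1 / h"
proof -
  have "pv h \<gamma> S (2*j) + pv h \<gamma> S (Suc (2*j)) = (1 + \<gamma> * sg S j) / (2*h) + (1 - \<gamma> * sg S j) / (2*h)"
    using assms by (simp add: pv_even pv_odd')
  also have "\<dots> = 2 / (2 * h)" by (simp add: add_divide_distrib[symmetric])
  also have "\<dots> = 1 / h" by simp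
  finally show ?thesis .
qed

lemma sg_abs: "\<bar>sg S i\<bar> = 1" by (simp add: sg_def)

lemma pv_nonneg: assumes "0 \<le> \<gamma>" "\<gamma> \<le> 1" shows "0 \<le> pv h \<gamma> S x"
proof -
  have "\<bar>\<gamma> * sg S (x div 2) * (if even x then 1 else -1)\<bar> \<le> 1"
    using assms by (simp add: abs_mult sg_abs)
  then show ?thesis by (auto simp: pv_def abs_le_iff)
qed

lemma pv_sum: assumes "1 \<le> h" shows "(\<Sum>x<2*h. pv h \<gamma> S x) = 1"
proof -
  have "(\<Sum>x<2*h. pv h \<gamma> S x) = (\<Sum>i<h. pv h \<gamma> S (2*i) + pv h \<gamma> S (2*i+1))" by (rule sum_pairs)
  also have "\<dots> = (\<Sum>i<h. 1 / h)"
    by (intro sum.cong refl) (simp add: pv_pair)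
  also have "\<dots> = 1" using assms by simp
  finally show ?thesis .
qed

lemma pmf_PP: assumes "1 \<le> h" "0 \<le> \<gamma>" "\<gamma> \<le> 1" shows "pmf (PP h \<gamma> S) x = pv h \<gamma> S x"
  unfolding PP_def
  by (rule pmf_embed_finite[of "{..<2*h}"]) (use assms pv_nonneg pv_sum in \<open>auto simp: pv_def\<close>)

lemma set_PP: assumes "1 \<le> h" "0 \<le> \<gamma>" "\<gamma> \<le> 1" shows "set_pmf (PP h \<gamma> S) \<subseteq> {..<2*h}"
  using assms by (auto simp: set_pmf_eq pmf_PP pv_def)

lemma wv_nonneg: assumes "0 \<le> \<gamma>" "\<gamma> \<le> 1" shows "0 \<le> wv k h \<gamma> S i x"
  using assms pv_nonneg[OF assms] by (auto simp: wv_def)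

lemma wv_sum: assumes "1 \<le> h" "i < h" "2*h \<le> k" "0 \<le> \<gamma>" "\<gamma> \<le> 1"
  shows "(\<Sum>x\<in>insert k {..<2*h}. wv k h \<gamma> S i x) = 1"
proof -
  have kn: "k \<notin> {..<2*h}" using assms by auto
  have "(\<Sum>x<2*h. wv k h \<gamma> S i x) = (\<Sum>j<h. wv k h \<gamma> S i (2*j) + wv k h \<gamma> S i (2*j+1))" by (rule sum_pairs)
  also have "\<dots> = (\<Sum>j<h. if j = i then (1 - \<gamma>)/h else 1/h)"
  proof (intro sum.cong refl)
    fix j assume j: "j \<in> {..<h}"
    show "wv k h \<gamma> S i (2*j) + wv k h \<gamma> S i (2*j+1) = (if j = i then (1 - \<gamma>)/h else 1/h)"
    proof (cases "j = i")
      case True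
      then have "wv k h \<gamma> S i (2*j) + wv k h \<gamma> S i (2*j+1) = (1-\<gamma>)/(2*h) + (1-\<gamma>)/(2*h)"
        using j by (simp add: wv_def)
      also have "\<dots> = (1-\<gamma>)/h" using assms by (simp add: field_simps)
      finally show ?thesis using True by simp
    next
      case False
      then show ?thesis using j pv_pair[of j h \<gamma> S] by (simp add: wv_def)
    qed
  qed
  also have "\<dots> = (1 - \<gamma>)/h + (\<Sum>j\<in>{..<h}-{i}. 1/h)"
    using assms by (subst sum.remove[of _ i]) (auto intro!: sum.cong)
  also have "\<dots> = (1 - \<gamma>)/h + (h - 1)/h" using assms by (simp add: of_nat_diff)
  finally have "(\<Sum>x<2*h. wv k h \<gamma> S i x) = (1 - \<gamma>)/h + (h - 1)/h" .
  moreover have "wv k h \<gamma> S i k = \<gamma> / h" using assms by (simp add: wv_def)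
  ultimately have "(\<Sum>x\<in>insert k {..<2*h}. wv k h \<gamma> S i x) = \<gamma>/h + ((1 - \<gamma>)/h + (h - 1)/h)"
    using kn by simp
  also have "\<dots> = 1" using assms by (simp add: field_simps)
  finally show ?thesis .
qed

lemma pmf_WW: assumes "1 \<le> h" "i < h" "2*h \<le> k" "0 \<le> \<gamma>" "\<gamma> \<le> 1"
  shows "pmf (WW k h \<gamma> S i) x = wv k h \<gamma> S i x"
  unfolding WW_def
  by (rule pmf_embed_finite[of "insert k {..<2*h}"]) (use assms wv_nonneg wv_sum in \<open>auto simp: wv_def\<close>)

lemma set_WW: assumes "1 \<le> h" "i < h" "2*h \<le> k" "0 \<le> \<gamma>" "\<gamma> \<le> 1"
  shows "set_pmf (WW k h \<gamma> S i) \<subseteq> insert k {..<2*h}"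
  using assms by (auto simp: set_pmf_eq pmf_WW wv_def)

definition sub :: "nat \<Rightarrow> nat \<Rightarrow> nat \<Rightarrow> nat" where "sub k a x = (if x = k then a else x)"

lemma pmf_map_sub: assumes "a \<noteq> k"
  shows "pmf (map_pmf (sub k a) W) y = (if y = a then pmf W a + pmf W k else if y = k then 0 else pmf W y)"
proof -
  have "pmf (map_pmf (sub k a) W) y = measure W (sub k a -` {y})" by (rule pmf_map)
  also have "sub k a -` {y} = (if y = a then {a, k} else if y = k then {} else {y})"
    using assms by (auto simp: sub_def split: if_splits)
  finally show ?thesis using assms by (simp add: measure_measure_pmf_finite measure_pmf_single)
qed

lemma PP_map: assumes "1 \<le> h" "i < h" "2*h \<le> k" "0 \<le> \<gamma>" "\<gamma> \<le> 1" "i \<in> S"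
  shows "PP h \<gamma> S = map_pmf (sub k (2*i)) (WW k h \<gamma> S i)"
    and "PP h \<gamma> (S - {i}) = map_pmf (sub k (2*i+1)) (WW k h \<gamma> S i)"
proof -
  have a: "2*i \<noteq> k" "2*i+1 \<noteq> k" using assms by auto
  have dv: "x div 2 = i \<Longrightarrow> x = 2*i \<or> x = 2*i+1" for x by auto
  show "PP h \<gamma> S = map_pmf (sub k (2*i)) (WW k h \<gamma> S i)"
  proof (rule pmf_eqI)
    fix y
    show "pmf (PP h \<gamma> S) y = pmf (map_pmf (sub k (2*i)) (WW k h \<gamma> S i)) y"
      unfolding pmf_map_sub[OF a(1)] pmf_PP[OF assms(1,4,5)] pmf_WW[OF assms(1-5)]
      using assms dv[of y] by (auto simp: wv_def pv_def sg_def field_simps)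
  qed
  show "PP h \<gamma> (S - {i}) = map_pmf (sub k (2*i+1)) (WW k h \<gamma> S i)"
  proof (rule pmf_eqI)
    fix y
    show "pmf (PP h \<gamma> (S - {i})) y = pmf (map_pmf (sub k (2*i+1)) (WW k h \<gamma> S i)) y"
      unfolding pmf_map_sub[OF a(2)] pmf_PP[OF assms(1,4,5)] pmf_WW[OF assms(1-5)]
      using assms dv[of y] by (auto simp: wv_def pv_def sg_def field_simps)
  qed
qed

lemma counts_cong: "(\<And>u j. u < s \<Longrightarrow> j < m \<Longrightarrow> D u j = D' u j) \<Longrightarrow> counts s m D = counts s m D'"
  unfolding counts_def by (intro ext arg_cong[where f=card]) auto

lemma group_privacy:
  fixes r :: nat
  assumes vm: "valid_count_mechanism k M" and dp: "count_mechanism_dp k m M \<epsilon> \<delta>"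
    and e: "0 \<le> \<epsilon>" and d: "0 \<le> \<delta>" and B: "B \<in> sets (out_space k)"
  shows "valid_dataset k s m D \<Longrightarrow> valid_dataset k s m D' \<Longrightarrow>
         (\<forall>u<s. r \<le> u \<longrightarrow> (\<forall>j<m. D u j = D' u j)) \<Longrightarrow>
         measure (M s (counts s m D')) B \<le> measure (M s (counts s m D)) B + r * (exp \<epsilon> - 1 + \<delta>)"
proof (induction r arbitrary: D')
  case 0
  then have "counts s m D' = counts s m D" by (intro counts_cong) auto
  then show ?case by simp
next
  case (Suc r)
  define H where "H = (\<lambda>u j. if u = r then D u j else D' u j)"
  have vH: "valid_dataset k s m H" using Suc.prems(1,2) by (auto simp: valid_dataset_def H_def)
  have IH: "measure (M s (counts s m H)) B \<le> measure (M s (counts s m D)) B + r * (exp \<epsilon> - 1 + \<delta>)"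
    using Suc.prems(3) vH Suc.prems(1) by (intro Suc.IH) (auto simp: H_def)
  have step: "measure (M s (counts s m D')) B \<le> measure (M s (counts s m H)) B + (exp \<epsilon> - 1 + \<delta>)"
  proof (cases "r < s")
    case True
    have adj: "user_adjacent s m D' H" unfolding user_adjacent_def H_def using True by auto
    have B': "B \<in> sets (out_space k)" by (rule B)
    have "measure (M s (counts s m D')) B \<le> exp \<epsilon> * measure (M s (counts s m H)) B + \<delta>"
      by (rule dp[unfolded count_mechanism_dp_def, rule_format]) (use Suc.prems(2) vH adj B in auto)
    moreover have "measure (M s (counts s m H)) B \<le> 1"
    proof -
      interpret prob_space "M s (counts s m H)" using vm unfolding valid_count_mechanism_def by blast
      show ?thesis by (rule prob_le_1)
    qed
    moreover have "1 \<le> exp \<epsilon>" using e by simp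
    ultimately have "measure (M s (counts s m D')) B \<le> measure (M s (counts s m H)) B + (exp \<epsilon> - 1) * measure (M s (counts s m H)) B + \<delta>"
      by (simp add: algebra_simps)
    also have "\<dots> \<le> measure (M s (counts s m H)) B + (exp \<epsilon> - 1) * 1 + \<delta>"
      using \<open>measure (M s (counts s m H)) B \<le> 1\<close> \<open>1 \<le> exp \<epsilon>\<close> by (intro add_mono mult_left_mono) auto
    finally show ?thesis by simp
  next
    case False
    then have "counts s m D' = counts s m H" by (intro counts_cong) (auto simp: H_def)
    moreover have "0 \<le> exp \<epsilon> - 1 + \<delta>" using e d by simp
    ultimately show ?thesis by simp
  qed
  show ?case using IH step by (simp add: algebra_simps)
qed

lemma rearrange:
  fixes Dt :: "nat \<Rightarrow> nat \<Rightarrow> nat"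
  assumes m: "0 < m"
  shows "\<exists>E. (\<forall>g. counts s m (\<lambda>u j. g (E u j)) = counts s m (\<lambda>u j. g (Dt u j)))
            \<and> (\<forall>u<s. \<forall>j<m. \<exists>u'<s. \<exists>j'<m. E u j = Dt u' j')
            \<and> (\<forall>u<s. \<forall>j<m. E u j = k \<longrightarrow> u * m < card {(u,j). u<s \<and> j<m \<and> Dt u j = k})"
proof -
  define Pos where "Pos = {..<s} \<times> {..<m}"
  define Wd where "Wd = {p\<in>Pos. Dt (fst p) (snd p) = k}"
  define l where "l = card Wd"
  have l_eq: "card {(u,j). u<s \<and> j<m \<and> Dt u j = k} = l"
    unfolding l_def Wd_def Pos_def by (intro arg_cong[where f=card]) auto
  have finPos: "finite Pos" by (simp add: Pos_def)
  have WdPos: "Wd \<subseteq> Pos" by (auto simp: Wd_def)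
  have cardPos: "card Pos = s * m" by (simp add: Pos_def card_cartesian_product)
  have lle: "l \<le> s * m" unfolding l_def using card_mono[OF finPos WdPos] cardPos by simp
  define F where "F = {p\<in>Pos. fst p * m + snd p < l}"
  have bijF: "bij_betw (\<lambda>t. (t div m, t mod m)) {..<l} F"
  proof (rule bij_betw_byWitness[where f' = "\<lambda>p. fst p * m + snd p"])
    show "\<forall>a\<in>{..<l}. fst (a div m, a mod m) * m + snd (a div m, a mod m) = a" by simp
    show "\<forall>a'\<in>F. (\<lambda>t. (t div m, t mod m)) (fst a' * m + snd a') = a'"
      using m by (auto simp: F_def Pos_def)
    show "(\<lambda>t. (t div m, t mod m)) ` {..<l} \<subseteq> F"
    proof
      fix p assume "p \<in> (\<lambda>t. (t div m, t mod m)) ` {..<l}"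
      then obtain t where t: "t < l" "p = (t div m, t mod m)" by auto
      have "t < s * m" using t lle by simp
      then have "t div m < s" using m by (simp add: div_less_iff_less_mult)
      then show "p \<in> F" using t m by (simp add: F_def Pos_def)
    qed
    show "(\<lambda>p. fst p * m + snd p) ` F \<subseteq> {..<l}" by (auto simp: F_def)
  qed
  have cardF: "card F = l" using bij_betw_same_card[OF bijF] by simp
  have FPos: "F \<subseteq> Pos" by (auto simp: F_def)
  obtain s1 where s1: "bij_betw s1 F Wd"
    using finite_same_card_bij[of F Wd] finite_subset[OF FPos finPos] finite_subset[OF WdPos finPos] cardF l_def by auto
  have c2: "card (Pos - F) = card (Pos - Wd)"
    using card_Diff_subset[OF finite_subset[OF FPos finPos] FPos] card_Diff_subset[OF finite_subset[OF WdPos finPos] WdPos] cardF l_def by simp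
  obtain s2 where s2: "bij_betw s2 (Pos - F) (Pos - Wd)"
    using finite_same_card_bij[of "Pos - F" "Pos - Wd"] finPos c2 by auto
  define \<sigma> where "\<sigma> = (\<lambda>p. if p \<in> F then s1 p else s2 p)"
  have b1: "bij_betw \<sigma> F Wd" using s1 by (rule bij_betw_cong[THEN iffD1, rotated]) (simp add: \<sigma>_def)
  have b2: "bij_betw \<sigma> (Pos - F) (Pos - Wd)" using s2 by (rule bij_betw_cong[THEN iffD1, rotated]) (simp add: \<sigma>_def)
  have bij: "bij_betw \<sigma> Pos Pos"
  proof -
    have "bij_betw \<sigma> (F \<union> (Pos - F)) (Wd \<union> (Pos - Wd))" by (rule bij_betw_combine[OF b1 b2]) auto
    moreover have "F \<union> (Pos - F) = Pos" "Wd \<union> (Pos - Wd) = Pos" using FPos WdPos by auto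
    ultimately show ?thesis by simp
  qed
  define E where "E = (\<lambda>u j. Dt (fst (\<sigma> (u,j))) (snd (\<sigma> (u,j))))"
  have cardsig: "card {p\<in>Pos. P (\<sigma> p)} = card {q\<in>Pos. P q}" for P
  proof -
    have "bij_betw \<sigma> {p\<in>Pos. P (\<sigma> p)} {q\<in>Pos. P q}"
    proof -
      have inj: "inj_on \<sigma> {p\<in>Pos. P (\<sigma> p)}" using bij unfolding bij_betw_def by (auto intro: inj_on_subset)
      have "\<sigma> ` {p\<in>Pos. P (\<sigma> p)} = {q\<in>Pos. P q}"
      proof
        show "\<sigma> ` {p\<in>Pos. P (\<sigma> p)} \<subseteq> {q\<in>Pos. P q}" using bij unfolding bij_betw_def by auto
        show "{q\<in>Pos. P q} \<subseteq> \<sigma> ` {p\<in>Pos. P (\<sigma> p)}"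
        proof
          fix q assume q: "q \<in> {q\<in>Pos. P q}"
          have "q \<in> \<sigma> ` Pos" using bij q unfolding bij_betw_def by auto
          then obtain p where "p \<in> Pos" "q = \<sigma> p" by blast
          then show "q \<in> \<sigma> ` {p\<in>Pos. P (\<sigma> p)}" using q by auto
        qed
      qed
      then show ?thesis using inj by (simp add: bij_betw_def)
    qed
    then show ?thesis by (rule bij_betw_same_card)
  qed
  have C1: "counts s m (\<lambda>u j. g (E u j)) = counts s m (\<lambda>u j. g (Dt u j))" for g
  proof
    fix i
    have "counts s m (\<lambda>u j. g (E u j)) i = card {p\<in>Pos. (\<lambda>q. g (Dt (fst q) (snd q)) = i) (\<sigma> p)}"
      unfolding counts_def E_def Pos_def by (intro arg_cong[where f=card]) auto
    also have "\<dots> = card {q\<in>Pos. g (Dt (fst q) (snd q)) = i}" by (rule cardsig)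
    also have "\<dots> = counts s m (\<lambda>u j. g (Dt u j)) i"
      unfolding counts_def Pos_def by (intro arg_cong[where f=card]) auto
    finally show "counts s m (\<lambda>u j. g (E u j)) i = counts s m (\<lambda>u j. g (Dt u j)) i" .
  qed
  have C2: "\<forall>u<s. \<forall>j<m. \<exists>u'<s. \<exists>j'<m. E u j = Dt u' j'"
  proof (intro allI impI)
    fix u j assume "u < s" "j < m"
    then have "\<sigma> (u,j) \<in> Pos" using bij unfolding bij_betw_def Pos_def by auto
    then show "\<exists>u'<s. \<exists>j'<m. E u j = Dt u' j'" unfolding E_def Pos_def by (auto simp: mem_Times_iff)
  qed
  have C3: "\<forall>u<s. \<forall>j<m. E u j = k \<longrightarrow> u * m < l"
  proof (intro allI impI)
    fix u j assume uj: "u < s" "j < m" "E u j = k"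
    show "u * m < l"
    proof (rule ccontr)
      assume "\<not> u * m < l"
      then have "(u,j) \<notin> F" by (auto simp: F_def)
      moreover have "(u,j) \<in> Pos" using uj by (simp add: Pos_def)
      ultimately have "\<sigma> (u,j) \<in> Pos - Wd" using b2 unfolding bij_betw_def by auto
      then show False using uj(3) by (auto simp: Wd_def E_def)
    qed
  qed
  show ?thesis
  proof (intro exI[of _ E] conjI)
    show "\<forall>g. counts s m (\<lambda>u j. g (E u j)) = counts s m (\<lambda>u j. g (Dt u j))" using C1 by blast
    show "\<forall>u<s. \<forall>j<m. \<exists>u'<s. \<exists>j'<m. E u j = Dt u' j'" by (rule C2)
    show "\<forall>u<s. \<forall>j<m. E u j = k \<longrightarrow> u * m < card {(u,j). u<s \<and> j<m \<and> Dt u j = k}"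
      unfolding l_eq by (rule C3)
  qed
qed

lemma sample_data_map:
  assumes "f 0 = 0"
  shows "sample_data s m (map_pmf f p) = map_pmf (\<lambda>D u j. f (D u j)) (sample_data s m p)"
proof -
  have inner: "Pi_pmf {..<m} 0 (\<lambda>_. map_pmf f p) = map_pmf (\<lambda>h. f \<circ> h) (Pi_pmf {..<m} 0 (\<lambda>_. p))"
    by (rule Pi_pmf_map) (auto simp: assms)
  have "sample_data s m (map_pmf f p) = Pi_pmf {..<s} (\<lambda>_. 0) (\<lambda>_. map_pmf (\<lambda>h. f \<circ> h) (Pi_pmf {..<m} 0 (\<lambda>_. p)))"
    unfolding sample_data_def inner ..
  also have "\<dots> = map_pmf (\<lambda>H. (\<lambda>h. f \<circ> h) \<circ> H) (Pi_pmf {..<s} (\<lambda>_. 0) (\<lambda>_. Pi_pmf {..<m} 0 (\<lambda>_. p)))"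
    by (rule Pi_pmf_map) (auto simp: assms comp_def)
  also have "(\<lambda>H. (\<lambda>h. f \<circ> h) \<circ> H) = (\<lambda>D u j. f (D u j))" by (auto simp: comp_def)
  finally show ?thesis unfolding sample_data_def .
qed

lemma set_sample_data:
  assumes "set_pmf p \<subseteq> X"
  shows "set_pmf (sample_data s m p) \<subseteq> PiE_dflt {..<s} (\<lambda>_. 0) (\<lambda>_. PiE_dflt {..<m} 0 (\<lambda>_. X))"
  unfolding sample_data_def using assms
  by (auto simp: set_Pi_pmf PiE_dflt_def)

lemma sample_data_val:
  assumes "D \<in> set_pmf (sample_data s m p)" "u < s" "j < m"
  shows "D u j \<in> set_pmf p"
  using set_sample_data[of p "set_pmf p" s m] assms by (auto simp: PiE_dflt_def)

lemma finite_sample_data: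
  assumes "finite (set_pmf p)"
  shows "finite (set_pmf (sample_data s m p))"
  by (rule finite_subset[OF set_sample_data[OF order_refl]]) (use assms in auto)

lemma card_as_sum:
  "finite A \<Longrightarrow> real (card {p\<in>A. P p}) = (\<Sum>p\<in>A. if P p then 1 else 0)"
  by (simp add: sum.If_cases Int_def conj_commute)

lemma expect_card:
  assumes fin: "finite (set_pmf w)"
  shows "measure_pmf.expectation (sample_data s m w) (\<lambda>D. real (card {(u,j). u<s \<and> j<m \<and> D u j = k}))
         = real s * real m * pmf w k"
proof -
  let ?W = "sample_data s m w"
  have intg: "integrable ?W f" for f :: "_ \<Rightarrow> real"
    by (rule integrable_measure_pmf_finite[OF finite_sample_data[OF fin]])
  have eq: "real (card {(u,j). u<s \<and> j<m \<and> D u j = k}) = (\<Sum>p\<in>{..<s}\<times>{..<m}. if D (fst p) (snd p) = k then 1 else (0::real))" for D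
  proof -
    have "{(u,j). u<s \<and> j<m \<and> D u j = k} = {p\<in>{..<s}\<times>{..<m}. D (fst p) (snd p) = k}" by auto
    then show ?thesis by (simp add: card_as_sum)
  qed
  have comp: "measure_pmf.expectation ?W (\<lambda>D. if D (fst p) (snd p) = k then 1 else (0::real)) = pmf w k"
    if pin: "p \<in> {..<s}\<times>{..<m}" for p
  proof -
    obtain u j where p: "p = (u,j)" "u < s" "j < m" using pin by (cases p) auto
    have "map_pmf (\<lambda>D. D u j) ?W = map_pmf (\<lambda>h. h j) (map_pmf (\<lambda>D. D u) ?W)"
      by (simp add: pmf.map_comp comp_def)
    also have "map_pmf (\<lambda>D. D u) ?W = Pi_pmf {..<m} 0 (\<lambda>_. w)"
      unfolding sample_data_def using p by (subst Pi_pmf_component) auto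
    also have "map_pmf (\<lambda>h. h j) (Pi_pmf {..<m} 0 (\<lambda>_. w)) = w"
      using p by (subst Pi_pmf_component) auto
    finally have mw: "map_pmf (\<lambda>D. D u j) ?W = w" .
    have "measure_pmf.expectation ?W (\<lambda>D. if D (fst p) (snd p) = k then 1 else (0::real))
        = measure_pmf.expectation (map_pmf (\<lambda>D. D u j) ?W) (\<lambda>x. if x = k then 1 else (0::real))"
      using p by simp
    also have "\<dots> = measure_pmf.expectation w (\<lambda>x. if x = k then 1 else (0::real))" by (simp only: mw)
    also have "\<dots> = (\<Sum>a\<in>{k}. (if a = k then 1 else (0::real)) * pmf w a)"
      by (rule integral_measure_pmf_real) (auto split: if_splits)
    also have "\<dots> = pmf w k" by simp
    finally show ?thesis .
  qed
  have "measure_pmf.expectation ?W (\<lambda>D. real (card {(u,j). u<s \<and> j<m \<and> D u j = k}))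
      = measure_pmf.expectation ?W (\<lambda>D. \<Sum>p\<in>{..<s}\<times>{..<m}. if D (fst p) (snd p) = k then 1 else (0::real))"
    by (simp only: eq)
  also have "\<dots> = (\<Sum>p\<in>{..<s}\<times>{..<m}. measure_pmf.expectation ?W (\<lambda>D. if D (fst p) (snd p) = k then 1 else (0::real)))"
    by (rule Bochner_Integration.integral_sum) (rule integrable_measure_pmf_finite[OF finite_sample_data[OF fin]])
  also have "\<dots> = (\<Sum>p\<in>{..<s}\<times>{..<m}. pmf w k)" by (rule sum.cong) (auto simp: comp)
  also have "\<dots> = real s * real m * pmf w k" by (simp add: card_cartesian_product)
  finally show ?thesis .
qed

locale setting =
  fixes k m s h :: nat and \<gamma> \<epsilon> \<delta> :: real and M :: "nat \<Rightarrow> (nat \<Rightarrow> nat) \<Rightarrow> (nat \<Rightarrow> real) measure"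
  assumes k2: "2 \<le> k" and hdef: "h = k div 2" and m1: "1 \<le> m" and g0: "0 < \<gamma>" and g1: "\<gamma> \<le> 1"
    and vm: "valid_count_mechanism k M" and dp: "count_mechanism_dp k m M \<epsilon> \<delta>"
    and e0: "0 \<le> \<epsilon>" and d0: "0 \<le> \<delta>"
begin

lemma h1: "1 \<le> h" using k2 hdef by auto
lemma h2k: "2*h \<le> k" using hdef by auto

definition Bset :: "nat \<Rightarrow> (nat \<Rightarrow> real) set" where
  "Bset i = {x \<in> space (out_space k). x (2*i) \<le> x (2*i+1)}"

definition phi :: "nat \<Rightarrow> (nat \<Rightarrow> nat) \<Rightarrow> real" where
  "phi i N = measure (M s N) (Bset i)"

lemma Bset_sets: assumes "i < h" shows "Bset i \<in> sets (out_space k)"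
proof -
  have a: "2*i \<in> {..<k}" "2*i+1 \<in> {..<k}" using assms h2k by auto
  show ?thesis unfolding Bset_def out_space_def using a by measurable
qed

lemma MsN: "prob_space (M s N)" "sets (M s N) = sets (out_space k)" "space (M s N) = space (out_space k)"
  "AE x in M s N. x \<in> prob_simplex k"
  using vm unfolding valid_count_mechanism_def by auto

lemma phi_bounds: "0 \<le> phi i N" "phi i N \<le> 1"
proof -
  interpret prob_space "M s N" by (rule MsN)
  show "0 \<le> phi i N" "phi i N \<le> 1" unfolding phi_def by auto
qed

lemma pmfPP: "pmf (PP h \<gamma> S) x = pv h \<gamma> S x"
  using pmf_PP[OF h1 less_imp_le[OF g0] g1] .

lemma pair_lb:
  assumes i: "i < h" and x: "x \<in> (if i \<in> S then Bset i else space (out_space k) - Bset i)"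
  shows "\<gamma> / h \<le> \<bar>pv h \<gamma> S (2*i) - x (2*i)\<bar> + \<bar>pv h \<gamma> S (2*i+1) - x (2*i+1)\<bar>"
proof (cases "i \<in> S")
  case True
  then have x0: "x (2*i) \<le> x (2*i+1)" using x by (simp add: Bset_def)
  have a: "pv h \<gamma> S (2*i) = (1 + \<gamma>) / (2*h)" "pv h \<gamma> S (2*i+1) = (1 - \<gamma>) / (2*h)"
    using True i by (simp_all add: pv_even pv_odd pv_odd' sg_def)
  have "pv h \<gamma> S (2*i) - pv h \<gamma> S (2*i+1) = \<gamma> / h"
    unfolding a using h1 by (simp add: field_simps)
  then show ?thesis using x0 by linarith
next
  case False
  then have x0: "x (2*i) > x (2*i+1)" using x by (auto simp: Bset_def)
  have a: "pv h \<gamma> S (2*i) = (1 - \<gamma>) / (2*h)" "pv h \<gamma> S (2*i+1) = (1 + \<gamma>) / (2*h)"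
    using False i by (simp_all add: pv_even pv_odd pv_odd' sg_def)
  have "pv h \<gamma> S (2*i+1) - pv h \<gamma> S (2*i) = \<gamma> / h"
    unfolding a using h1 by (simp add: field_simps)
  then show ?thesis using x0 by linarith
qed

definition Wr :: "nat set \<Rightarrow> nat \<Rightarrow> (nat \<Rightarrow> real) set" where
  "Wr S i = (if i \<in> S then Bset i else space (out_space k) - Bset i)"

lemma Wr_sets: "i < h \<Longrightarrow> Wr S i \<in> sets (out_space k)"
  unfolding Wr_def using Bset_sets by auto

lemma measure_Wr: assumes "i < h"
  shows "measure (M s N) (Wr S i) = (if i \<in> S then phi i N else 1 - phi i N)"
proof -
  interpret prob_space "M s N" by (rule MsN)
  have "Bset i \<in> events" using Bset_sets[OF assms] MsN(2) by simp
  then show ?thesis unfolding Wr_def phi_def using prob_compl[of "Bset i"] MsN(3) by auto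
qed

lemma pointwise_lb:
  "(\<gamma> / h) * (\<Sum>i<h. indicator (Wr S i) x) \<le> (\<Sum>j<k. \<bar>pv h \<gamma> S j - x j\<bar>)"
proof -
  have "(\<gamma> / h) * (\<Sum>i<h. indicator (Wr S i) x) = (\<Sum>i<h. (\<gamma> / h) * indicator (Wr S i) x)"
    by (simp add: sum_distrib_left)
  also have "\<dots> \<le> (\<Sum>i<h. \<bar>pv h \<gamma> S (2*i) - x (2*i)\<bar> + \<bar>pv h \<gamma> S (2*i+1) - x (2*i+1)\<bar>)"
  proof (rule sum_mono)
    fix i assume "i \<in> {..<h}"
    then show "(\<gamma> / h) * indicator (Wr S i) x \<le> \<bar>pv h \<gamma> S (2*i) - x (2*i)\<bar> + \<bar>pv h \<gamma> S (2*i+1) - x (2*i+1)\<bar>"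
      using pair_lb[of i x S] by (auto simp: indicator_def Wr_def)
  qed
  also have "\<dots> = (\<Sum>j<2*h. \<bar>pv h \<gamma> S j - x j\<bar>)" by (rule sum_pairs[symmetric])
  also have "\<dots> \<le> (\<Sum>j<k. \<bar>pv h \<gamma> S j - x j\<bar>)"
    by (rule sum_mono2) (use h2k in auto)
  finally show ?thesis .
qed

lemma inner_lb: assumes S: "S \<subseteq> {..<h}"
  shows "(\<gamma> / h) * (\<Sum>i<h. if i \<in> S then phi i N else 1 - phi i N)
         \<le> (\<integral>x. (\<Sum>j<k. \<bar>pmf (PP h \<gamma> S) j - x j\<bar>) \<partial>(M s N))"
proof -
  interpret prob_space "M s N" by (rule MsN)
  have meas: "(\<lambda>x. \<Sum>j<k. \<bar>pmf (PP h \<gamma> S) j - x j\<bar>) \<in> borel_measurable (M s N)"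
  proof -
    have "(\<lambda>x. \<Sum>j<k. \<bar>pmf (PP h \<gamma> S) j - x j\<bar>) \<in> borel_measurable (out_space k)"
      unfolding out_space_def by measurable
    then show ?thesis using measurable_cong_sets[OF MsN(2) refl] by blast
  qed
  have sp: "(\<Sum>j<k. pmf (PP h \<gamma> S) j) = 1"
    by (rule sum_pmf_eq_1) (use set_PP[OF h1 less_imp_le[OF g0] g1, of S] h2k in auto)
  have bnd: "AE x in M s N. norm (\<Sum>j<k. \<bar>pmf (PP h \<gamma> S) j - x j\<bar>) \<le> 2"
    using MsN(4)
  proof eventually_elim
    case (elim x)
    then have x0: "\<And>j. j < k \<Longrightarrow> 0 \<le> x j" and x1: "(\<Sum>j<k. x j) = 1" by (auto simp: prob_simplex_def)
    have "(\<Sum>j<k. \<bar>pmf (PP h \<gamma> S) j - x j\<bar>) \<le> (\<Sum>j<k. pmf (PP h \<gamma> S) j + x j)"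
      by (rule sum_mono) (use x0 in \<open>auto simp: abs_le_iff\<close>)
    also have "\<dots> = 2" using sp x1 by (simp add: sum.distrib)
    finally show ?case by simp
  qed
  have int1: "integrable (M s N) (\<lambda>x. \<Sum>j<k. \<bar>pmf (PP h \<gamma> S) j - x j\<bar>)"
    by (rule integrable_const_bound[OF bnd meas])
  have int2: "integrable (M s N) (\<lambda>x. (\<gamma> / h) * (\<Sum>i<h. indicator (Wr S i) x :: real))"
    using Wr_sets MsN(2) emeasure_finite by (intro integrable_mult_right Bochner_Integration.integrable_sum integrable_real_indicator) (auto simp: less_top[symmetric])
  have "(\<gamma> / h) * (\<Sum>i<h. if i \<in> S then phi i N else 1 - phi i N) = (\<gamma> / h) * (\<Sum>i<h. measure (M s N) (Wr S i))"
    by (simp add: measure_Wr)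
  also have "\<dots> = (\<integral>x. (\<gamma> / h) * (\<Sum>i<h. indicator (Wr S i) x :: real) \<partial>(M s N))"
  proof -
    have "(\<integral>x. (\<Sum>i<h. indicator (Wr S i) x :: real) \<partial>(M s N)) = (\<Sum>i<h. \<integral>x. indicator (Wr S i) x \<partial>(M s N))"
      using Wr_sets MsN(2) emeasure_finite by (intro Bochner_Integration.integral_sum integrable_real_indicator) (auto simp: less_top[symmetric])
    also have "\<dots> = (\<Sum>i<h. measure (M s N) (Wr S i))"
      using Wr_sets MsN(2) by (intro sum.cong refl) (simp add: measure_def)
    finally show ?thesis by simp
  qed
  also have "\<dots> \<le> (\<integral>x. (\<Sum>j<k. \<bar>pmf (PP h \<gamma> S) j - x j\<bar>) \<partial>(M s N))"
    by (rule integral_mono[OF int2 int1]) (simp only: pmfPP pointwise_lb)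
  finally show ?thesis .
qed

abbreviation SD :: "nat set \<Rightarrow> (nat \<Rightarrow> nat \<Rightarrow> nat) pmf" where
  "SD S \<equiv> sample_data s m (PP h \<gamma> S)"

lemma setPP: "set_pmf (PP h \<gamma> S) \<subseteq> {..<2*h}"
  using set_PP[OF h1 less_imp_le[OF g0] g1] .

lemma finSD: "finite (set_pmf (SD S))"
  by (rule finite_sample_data) (rule finite_subset[OF setPP], simp)

lemma loss_lb: assumes S: "S \<subseteq> {..<h}"
  shows "(\<gamma> / h) * (\<Sum>i<h. measure_pmf.expectation (SD S)
            (\<lambda>D. if i \<in> S then phi i (counts s m D) else 1 - phi i (counts s m D)))
         \<le> loss k M s m (PP h \<gamma> S)"
proof -
  let ?f = "\<lambda>i D. if i \<in> S then phi i (counts s m D) else 1 - phi i (counts s m D)"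
  have "(\<gamma> / h) * (\<Sum>i<h. measure_pmf.expectation (SD S) (?f i))
      = (\<gamma> / h) * measure_pmf.expectation (SD S) (\<lambda>D. \<Sum>i<h. ?f i D)"
    by (subst Bochner_Integration.integral_sum) (auto intro: integrable_measure_pmf_finite[OF finSD])
  also have "\<dots> = measure_pmf.expectation (SD S) (\<lambda>D. (\<gamma> / h) * (\<Sum>i<h. ?f i D))"
    by (rule integral_mult_right_zero[symmetric])
  also have "\<dots> \<le> loss k M s m (PP h \<gamma> S)"
    unfolding loss_def
    by (intro integral_mono integrable_measure_pmf_finite[OF finSD] inner_lb[OF S])
  finally show ?thesis .
qed

lemma bc0_lb: assumes i: "i < h" "i \<in> S"
  shows "1 - \<gamma>^2 / h \<le> (\<Sum>y<2*h. sqrt (pmf (PP h \<gamma> S) y) * sqrt (pmf (PP h \<gamma> (S - {i})) y))"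
proof -
  let ?S' = "S - {i}"
  have "(\<Sum>y<2*h. sqrt (pmf (PP h \<gamma> S) y) * sqrt (pmf (PP h \<gamma> ?S') y))
      = (\<Sum>j<h. sqrt (pv h \<gamma> S (2*j)) * sqrt (pv h \<gamma> ?S' (2*j)) + sqrt (pv h \<gamma> S (2*j+1)) * sqrt (pv h \<gamma> ?S' (2*j+1)))"
    unfolding pmfPP by (rule sum_pairs)
  also have "\<dots> \<ge> (\<Sum>j<h. if j = i then (1 - \<gamma>^2) / h else 1 / h)"
  proof (rule sum_mono)
    fix j assume j: "j \<in> {..<h}"
    show "(if j = i then (1 - \<gamma>^2) / h else 1 / h) \<le> sqrt (pv h \<gamma> S (2*j)) * sqrt (pv h \<gamma> ?S' (2*j)) + sqrt (pv h \<gamma> S (2*j+1)) * sqrt (pv h \<gamma> ?S' (2*j+1))"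
    proof (cases "j = i")
      case False
      then have sg: "sg ?S' j = sg S j" by (simp add: sg_def)
      have e1: "pv h \<gamma> ?S' (2*j) = pv h \<gamma> S (2*j)" "pv h \<gamma> ?S' (2*j+1) = pv h \<gamma> S (2*j+1)"
        using j by (simp_all add: pv_even pv_odd pv_odd' sg)
      have n: "0 \<le> pv h \<gamma> S x" for x using pv_nonneg less_imp_le[OF g0] g1 by blast
      have "sqrt (pv h \<gamma> S (2*j)) * sqrt (pv h \<gamma> ?S' (2*j)) + sqrt (pv h \<gamma> S (2*j+1)) * sqrt (pv h \<gamma> ?S' (2*j+1))
          = pv h \<gamma> S (2*j) + pv h \<gamma> S (Suc (2*j))"
        unfolding e1 using n by simp
      also have "\<dots> = 1 / h" using j by (simp add: pv_pair)
      finally show ?thesis using False by simp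
    next
      case True
      have a: "pv h \<gamma> S (2*i) = (1 + \<gamma>) / (2*h)" "pv h \<gamma> S (2*i+1) = (1 - \<gamma>) / (2*h)"
              "pv h \<gamma> ?S' (2*i) = (1 - \<gamma>) / (2*h)" "pv h \<gamma> ?S' (2*i+1) = (1 + \<gamma>) / (2*h)"
        using i by (simp_all add: pv_even pv_odd pv_odd' sg_def)
      have q0: "0 \<le> 1 - \<gamma>^2" using g0 g1 by (simp add: abs_square_le_1)
      have q1: "(1 - \<gamma>^2)^2 \<le> 1 - \<gamma>^2"
      proof -
        have "(1 - \<gamma>^2) * (1 - \<gamma>^2) \<le> 1 * (1 - \<gamma>^2)" using q0 g0 by (intro mult_right_mono) auto
        then show ?thesis by (simp add: power2_eq_square)
      qed
      have key: "(1 - \<gamma>^2) / (2*h) \<le> sqrt ((1 + \<gamma>) / (2*h)) * sqrt ((1 - \<gamma>) / (2*h))"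
      proof -
        have "((1 - \<gamma>^2) / (2*h))^2 \<le> (1 + \<gamma>) / (2*h) * ((1 - \<gamma>) / (2*h))"
        proof -
          have "((1 - \<gamma>^2) / (2*h))^2 = (1 - \<gamma>^2)^2 / (2*h)^2" by (simp add: power_divide)
          also have "\<dots> \<le> (1 - \<gamma>^2) / (2*h)^2" using q1 by (intro divide_right_mono) auto
          also have "\<dots> = (1 + \<gamma>) / (2*h) * ((1 - \<gamma>) / (2*h))" by (simp add: power2_eq_square algebra_simps)
          finally show ?thesis .
        qed
        then have "(1 - \<gamma>^2) / (2*h) \<le> sqrt ((1 + \<gamma>) / (2*h) * ((1 - \<gamma>) / (2*h)))"
          by (rule real_le_rsqrt)
        then show ?thesis by (simp only: real_sqrt_mult)
      qed
      have "(1 - \<gamma>^2) / h = (1 - \<gamma>^2) / (2*h) + (1 - \<gamma>^2) / (2*h)" by (simp add: field_simps)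
      also have "\<dots> \<le> sqrt (pv h \<gamma> S (2*j)) * sqrt (pv h \<gamma> ?S' (2*j)) + sqrt (pv h \<gamma> S (2*j+1)) * sqrt (pv h \<gamma> ?S' (2*j+1))"
        unfolding True a using key by (simp add: mult.commute)
      finally show ?thesis using True by simp
    qed
  qed
  also have "(\<Sum>j<h. if j = i then (1 - \<gamma>^2) / h else 1 / h) = (1 - \<gamma>^2) / h + (\<Sum>j\<in>{..<h}-{i}. 1 / h)"
    using i by (subst sum.remove[of _ i]) (auto intro!: sum.cong)
  also have "\<dots> = 1 - \<gamma>^2 / h" using i h1 by (simp add: of_nat_diff field_simps)
  finally show ?thesis by simp
qed

lemma pair_a: assumes i: "i < h" "i \<in> S" and cond: "real s * real m * \<gamma>^2 / h \<le> 1/2"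
  shows "1/8 \<le> measure_pmf.expectation (SD S) (\<lambda>D. phi i (counts s m D))
              + measure_pmf.expectation (SD (S - {i})) (\<lambda>D. 1 - phi i (counts s m D))"
proof -
  define X1 where "X1 = PiE_dflt {..<m} (0::nat) (\<lambda>_. {..<2*h})"
  define X2 where "X2 = PiE_dflt {..<s} (\<lambda>_. 0::nat) (\<lambda>_. X1)"
  have fX1: "finite X1" unfolding X1_def by auto
  have fX2: "finite X2" unfolding X2_def using fX1 by auto
  have sub: "set_pmf (SD T) \<subseteq> X2" for T
    unfolding X2_def X1_def by (rule set_sample_data[OF setPP])
  define bc0 where "bc0 = (\<Sum>y<2*h. sqrt (pmf (PP h \<gamma> S) y) * sqrt (pmf (PP h \<gamma> (S - {i})) y))"
  have bc0: "1 - \<gamma>^2 / h \<le> bc0" unfolding bc0_def by (rule bc0_lb[OF i])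
  have x0: "0 \<le> 1 - \<gamma>^2 / h"
  proof -
    have "\<gamma>^2 \<le> 1" using g0 g1 by (simp add: abs_square_le_1)
    then have "\<gamma>^2 / h \<le> 1" using h1 by (simp add: divide_le_eq)
    then show ?thesis by simp
  qed
  have prodeq: "(\<Sum>D\<in>X2. sqrt (pmf (SD S) D) * sqrt (pmf (SD (S - {i})) D)) = (bc0 ^ m) ^ s"
  proof -
    have "(\<Sum>D\<in>X2. sqrt (pmf (SD S) D) * sqrt (pmf (SD (S - {i})) D))
        = (\<Prod>u\<in>{..<s}. \<Sum>y\<in>X1. sqrt (pmf (Pi_pmf {..<m} 0 (\<lambda>_. PP h \<gamma> S)) y) * sqrt (pmf (Pi_pmf {..<m} 0 (\<lambda>_. PP h \<gamma> (S - {i}))) y))"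
      unfolding X2_def sample_data_def by (rule bc_Pi) (use fX1 in auto)
    also have "\<dots> = (\<Prod>u\<in>{..<s}. \<Prod>j\<in>{..<m}. bc0)"
      unfolding X1_def bc0_def by (intro prod.cong refl bc_Pi) auto
    also have "\<dots> = (bc0 ^ m) ^ s" by simp
    finally show ?thesis .
  qed
  have "1/2 \<le> 1 + real (m * s) * (- (\<gamma>^2 / h))" using cond by (simp add: field_simps)
  also have "\<dots> \<le> (1 + (- (\<gamma>^2 / h))) ^ (m * s)"
    by (rule Bernoulli_inequality) (use x0 in simp)
  also have "\<dots> = ((1 - \<gamma>^2 / h) ^ m) ^ s" by (simp add: power_mult)
  also have "\<dots> \<le> (bc0 ^ m) ^ s" using bc0 x0 by (intro power_mono zero_le_power) auto
  finally have half: "1/2 \<le> (\<Sum>D\<in>X2. sqrt (pmf (SD S) D) * sqrt (pmf (SD (S - {i})) D))"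
    unfolding prodeq .
  have lc: "(1/2)^2/2 \<le> (\<Sum>D\<in>X2. pmf (SD S) D * phi i (counts s m D)) + (\<Sum>D\<in>X2. pmf (SD (S - {i})) D * (1 - phi i (counts s m D)))"
    by (rule lecam[OF fX2 sub sub]) (use phi_bounds half in auto)
  have E1: "measure_pmf.expectation (SD S) (\<lambda>D. phi i (counts s m D)) = (\<Sum>D\<in>X2. phi i (counts s m D) * pmf (SD S) D)"
    by (rule integral_measure_pmf_real[OF fX2]) (use sub in auto)
  have E2: "measure_pmf.expectation (SD (S - {i})) (\<lambda>D. 1 - phi i (counts s m D)) = (\<Sum>D\<in>X2. (1 - phi i (counts s m D)) * pmf (SD (S - {i})) D)"
    by (rule integral_measure_pmf_real[OF fX2]) (use sub in auto)
  have c1: "(\<Sum>D\<in>X2. phi i (counts s m D) * pmf (SD S) D) = (\<Sum>D\<in>X2. pmf (SD S) D * phi i (counts s m D))"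
    by (simp add: mult.commute)
  have c2: "(\<Sum>D\<in>X2. (1 - phi i (counts s m D)) * pmf (SD (S - {i})) D) = (\<Sum>D\<in>X2. pmf (SD (S - {i})) D * (1 - phi i (counts s m D)))"
    by (simp add: mult.commute)
  have "(1/2::real)^2/2 = 1/8" by (simp add: power2_eq_square)
  then show ?thesis using lc unfolding E1 E2 c1 c2 by linarith
qed

lemma pair_b: assumes i: "i < h" "i \<in> S" and cond: "(real s * \<gamma> / h + 1) * (exp \<epsilon> - 1 + \<delta>) \<le> 7/8"
  shows "1/8 \<le> measure_pmf.expectation (SD S) (\<lambda>D. phi i (counts s m D))
              + measure_pmf.expectation (SD (S - {i})) (\<lambda>D. 1 - phi i (counts s m D))"
proof -
  define w where "w = WW k h \<gamma> S i"
  define a where "a = sub k (2*i)"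
  define b where "b = sub k (2*i+1)"
  define W where "W = sample_data s m w"
  define \<eta> where "\<eta> = exp \<epsilon> - 1 + \<delta>"
  define L where "L = (\<lambda>D::nat\<Rightarrow>nat\<Rightarrow>nat. real (card {(u,j). u<s \<and> j<m \<and> D u j = k}))"
  have eta0: "0 \<le> \<eta>" using e0 d0 by (simp add: \<eta>_def)
  have g0': "0 \<le> \<gamma>" using g0 by simp
  have PPa: "PP h \<gamma> S = map_pmf a w" and PPb: "PP h \<gamma> (S - {i}) = map_pmf b w"
    unfolding a_def b_def w_def using PP_map[OF h1 i(1) h2k g0' g1 i(2)] by auto
  have a0: "a 0 = 0" "b 0 = 0" using k2 by (auto simp: a_def b_def sub_def)
  have SDa: "SD S = map_pmf (\<lambda>D u j. a (D u j)) W" unfolding PPa W_def by (rule sample_data_map[where f=a, OF a0(1)])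
  have SDb: "SD (S - {i}) = map_pmf (\<lambda>D u j. b (D u j)) W" unfolding PPb W_def by (rule sample_data_map[where f=b, OF a0(2)])
  have setw: "set_pmf w \<subseteq> insert k {..<2*h}" unfolding w_def by (rule set_WW[OF h1 i(1) h2k g0' g1])
  have finw: "finite (set_pmf w)" by (rule finite_subset[OF setw]) simp
  have finW: "finite (set_pmf W)" unfolding W_def by (rule finite_sample_data[OF finw])
  have pwk: "pmf w k = \<gamma> / h" unfolding w_def using h2k by (simp add: pmf_WW[OF h1 i(1) h2k g0' g1] wv_def)
  have m0: "0 < m" using m1 by simp
  have pt: "phi i (counts s m (\<lambda>u j. b (D u j))) \<le> phi i (counts s m (\<lambda>u j. a (D u j))) + (L D / m + 1) * \<eta>"
    if D: "D \<in> set_pmf W" for D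
  proof -
    define l where "l = card {(u,j). u<s \<and> j<m \<and> D u j = k}"
    obtain E where C1: "\<forall>g. counts s m (\<lambda>u j. g (E u j)) = counts s m (\<lambda>u j. g (D u j))"
      and C2: "\<forall>u<s. \<forall>j<m. \<exists>u'<s. \<exists>j'<m. E u j = D u' j'"
      and C3: "\<forall>u<s. \<forall>j<m. E u j = k \<longrightarrow> u * m < l"
      using rearrange[OF m0, of s D k] unfolding l_def by blast
    have Ev: "E u j \<in> insert k {..<2*h}" if uj: "u < s" "j < m" for u j
    proof -
      obtain u' j' where "u' < s" "j' < m" "E u j = D u' j'" using C2 uj by blast
      then show ?thesis using sample_data_val[of D s m w u' j'] D setw unfolding W_def by auto
    qed
    have va: "valid_dataset k s m (\<lambda>u j. a (E u j))" and vb: "valid_dataset k s m (\<lambda>u j. b (E u j))"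
      unfolding valid_dataset_def a_def b_def sub_def using Ev i h2k by (auto, fastforce+)
    define r where "r = l div m + 1"
    have lt: "l < r * m"
    proof -
      have "l div m * m + l mod m = l" by (rule div_mult_mod_eq)
      moreover have "l mod m < m" using m0 by simp
      moreover have "(l div m + 1) * m = l div m * m + m" by simp
      ultimately show ?thesis unfolding r_def by linarith
    qed
    have agree: "\<forall>u<s. r \<le> u \<longrightarrow> (\<forall>j<m. a (E u j) = b (E u j))"
    proof (intro allI impI)
      fix u j assume u: "u < s" "r \<le> u" and j: "j < m"
      have "r * m \<le> u * m" using u(2) by (rule mult_le_mono1)
      have "E u j \<noteq> k"
      proof
        assume "E u j = k"
        then have "u * m < l" using C3 u(1) j by blast
        then show False using lt \<open>r * m \<le> u * m\<close> by linarith
      qed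
      then show "a (E u j) = b (E u j)" by (simp add: a_def b_def sub_def)
    qed
    have gp: "measure (M s (counts s m (\<lambda>u j. b (E u j)))) (Bset i) \<le> measure (M s (counts s m (\<lambda>u j. a (E u j)))) (Bset i) + r * \<eta>"
      unfolding \<eta>_def by (rule group_privacy[OF vm dp e0 d0 Bset_sets[OF i(1)] va vb agree])
    have "real r \<le> L D / m + 1"
    proof -
      have "real (l div m) \<le> real l / real m" by (rule of_nat_div_le_of_nat)
      then show ?thesis unfolding r_def L_def l_def by simp
    qed
    then have "r * \<eta> \<le> (L D / m + 1) * \<eta>" using eta0 by (rule mult_right_mono)
    moreover have cb: "counts s m (\<lambda>u j. b (E u j)) = counts s m (\<lambda>u j. b (D u j))" using C1 by blast
    moreover have ca: "counts s m (\<lambda>u j. a (E u j)) = counts s m (\<lambda>u j. a (D u j))" using C1 by blast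
    ultimately show ?thesis using gp unfolding phi_def cb ca by linarith
  qed
  have intW: "integrable W f" for f :: "_ \<Rightarrow> real" by (rule integrable_measure_pmf_finite[OF finW])
  have EL: "measure_pmf.expectation W L = real s * real m * (\<gamma> / h)"
    unfolding W_def L_def pwk[symmetric] by (rule expect_card[OF finw])
  have "measure_pmf.expectation W (\<lambda>D. phi i (counts s m (\<lambda>u j. b (D u j))))
      \<le> measure_pmf.expectation W (\<lambda>D. phi i (counts s m (\<lambda>u j. a (D u j))) + (\<eta> / m) * L D + \<eta>)"
  proof (rule integral_mono_AE)
    show "integrable (measure_pmf W) (\<lambda>D. phi i (counts s m (\<lambda>u j. b (D u j))))"
      by (rule integrable_measure_pmf_finite[OF finW])
    show "integrable (measure_pmf W) (\<lambda>D. phi i (counts s m (\<lambda>u j. a (D u j))) + (\<eta> / m) * L D + \<eta>)"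
      by (rule integrable_measure_pmf_finite[OF finW])
    show "AE D in measure_pmf W. phi i (counts s m (\<lambda>u j. b (D u j))) \<le> phi i (counts s m (\<lambda>u j. a (D u j))) + (\<eta> / m) * L D + \<eta>"
      using pt by (intro AE_pmfI) (simp add: algebra_simps)
  qed
  also have "\<dots> = measure_pmf.expectation W (\<lambda>D. phi i (counts s m (\<lambda>u j. a (D u j)))) + (\<eta> / m) * measure_pmf.expectation W L + \<eta>"
    by (simp add: Bochner_Integration.integral_add integrable_measure_pmf_finite[OF finW])
  also have "\<dots> = measure_pmf.expectation W (\<lambda>D. phi i (counts s m (\<lambda>u j. a (D u j)))) + (real s * \<gamma> / h + 1) * \<eta>"
    unfolding EL using m0 by (simp add: field_simps)
  finally have main: "measure_pmf.expectation W (\<lambda>D. phi i (counts s m (\<lambda>u j. b (D u j))))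
      \<le> measure_pmf.expectation W (\<lambda>D. phi i (counts s m (\<lambda>u j. a (D u j)))) + (real s * \<gamma> / h + 1) * \<eta>" .
  have e2: "measure_pmf.expectation W (\<lambda>D. 1 - phi i (counts s m (\<lambda>u j. b (D u j))))
      = 1 - measure_pmf.expectation W (\<lambda>D. phi i (counts s m (\<lambda>u j. b (D u j))))"
    by (simp add: Bochner_Integration.integral_diff integrable_measure_pmf_finite[OF finW])
  show ?thesis unfolding SDa SDb integral_map_pmf e2 using main cond unfolding \<eta>_def by linarith
qed

lemma sum_Pow_split:
  fixes f :: "nat set \<Rightarrow> real"
  assumes "finite H" "i \<in> H"
  shows "sum f (Pow H) = sum f (Pow (H - {i})) + sum (\<lambda>T. f (insert i T)) (Pow (H - {i}))"
proof -
  have H: "H = insert i (H - {i})" using assms by auto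
  have P: "Pow H = Pow (H - {i}) \<union> insert i ` Pow (H - {i})" by (subst H, rule Pow_insert)
  have inj: "inj_on (insert i) (Pow (H - {i}))" by (rule inj_onI) auto
  have disj: "Pow (H - {i}) \<inter> insert i ` Pow (H - {i}) = {}" by auto
  have "sum f (Pow H) = sum f (Pow (H - {i})) + sum f (insert i ` Pow (H - {i}))"
    unfolding P using assms(1) disj by (intro sum.union_disjoint) auto
  also have "sum f (insert i ` Pow (H - {i})) = sum (\<lambda>T. f (insert i T)) (Pow (H - {i}))"
    by (subst sum.reindex[OF inj]) simp
  finally show ?thesis .
qed

lemma assouad:
  assumes cond: "real s * real m * \<gamma>^2 / h \<le> 1/2 \<or> (real s * \<gamma> / h + 1) * (exp \<epsilon> - 1 + \<delta>) \<le> 7/8"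
    and lossb: "\<And>S. S \<subseteq> {..<h} \<Longrightarrow> loss k M s m (PP h \<gamma> S) \<le> \<alpha>"
  shows "\<gamma> / 16 \<le> \<alpha>"
proof -
  define H where "H = {..<h}"
  define F where "F = (\<lambda>i T. measure_pmf.expectation (SD T)
            (\<lambda>D. if i \<in> T then phi i (counts s m D) else 1 - phi i (counts s m D)))"
  have pairL: "1/8 \<le> measure_pmf.expectation (SD T) (\<lambda>D. phi i (counts s m D))
              + measure_pmf.expectation (SD (T - {i})) (\<lambda>D. 1 - phi i (counts s m D))"
    if "i < h" "i \<in> T" for i T
    using cond pair_a[OF that] pair_b[OF that] by blast
  have perI: "real (2^(h-1)) / 8 \<le> (\<Sum>T\<in>Pow H. F i T)" if i: "i < h" for i
  proof -
    have "(\<Sum>T\<in>Pow H. F i T) = (\<Sum>T\<in>Pow (H - {i}). F i T + F i (insert i T))"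
      using sum_Pow_split[of H i "F i"] i by (simp add: H_def sum.distrib)
    also have "\<dots> \<ge> (\<Sum>T\<in>Pow (H - {i}). 1/8)"
    proof (rule sum_mono)
      fix T assume T: "T \<in> Pow (H - {i})"
      then have iT: "i \<notin> T" by auto
      have "insert i T - {i} = T" using iT by auto
      then have "1/8 \<le> F i (insert i T) + F i T"
        using pairL[of i "insert i T"] i iT unfolding F_def by simp
      then show "1/8 \<le> F i T + F i (insert i T)" by simp
    qed
    also have "(\<Sum>T\<in>Pow (H - {i}). (1::real)/8) = real (2^(h-1)) / 8"
      using i by (simp add: H_def card_Pow)
    finally show ?thesis by simp
  qed
  have "(\<gamma> / h) * (h * (real (2^(h-1)) / 8)) \<le> (\<gamma> / h) * (\<Sum>i<h. \<Sum>T\<in>Pow H. F i T)"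
  proof -
    have "(\<Sum>i<h. real (2^(h-1)) / 8) \<le> (\<Sum>i<h. \<Sum>T\<in>Pow H. F i T)" by (rule sum_mono) (rule perI, simp)
    then show ?thesis using g0 by (intro mult_left_mono) auto
  qed
  also have "\<dots> = (\<Sum>T\<in>Pow H. (\<gamma> / h) * (\<Sum>i<h. F i T))"
    by (simp add: sum.swap[of _ "{..<h}"] sum_distrib_left)
  also have "\<dots> \<le> (\<Sum>T\<in>Pow H. loss k M s m (PP h \<gamma> T))"
    by (rule sum_mono) (unfold F_def, rule loss_lb, simp add: H_def)
  also have "\<dots> \<le> (\<Sum>T\<in>Pow H. \<alpha>)" by (rule sum_mono) (rule lossb, simp add: H_def)
  also have "\<dots> = real (2^h) * \<alpha>" by (simp add: H_def card_Pow)
  finally have ineq: "\<gamma> * (real (2^(h-1)) / 8) \<le> real (2^h) * \<alpha>" using h1 by simp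
  have "(2::real)^h = 2 * 2^(h-1)" using h1 by (metis Suc_diff_1 less_le_trans zero_less_one power_Suc)
  then have "\<gamma> * (real (2^(h-1)) / 8) \<le> 2 * real (2^(h-1)) * \<alpha>" using ineq by simp
  then show ?thesis by (simp add: field_simps)
qed

end

theorem theorem1:
  "\<exists>c>0. \<forall>(k::nat) (m::nat) (\<alpha>::real) (\<epsilon>::real) (\<delta>::real) M.
     k \<ge> 2 \<and> m \<ge> 1 \<and> 0 < \<alpha> \<and> \<alpha> < c \<and> 0 \<le> \<epsilon> \<and> 0 \<le> \<delta> \<and> \<epsilon> + \<delta> < c \<and>
     valid_count_mechanism k M \<and> count_mechanism_dp k m M \<epsilon> \<delta> \<longrightarrow>
     (\<forall>s::nat. (\<forall>p::nat pmf. set_pmf p \<subseteq> {..<k} \<longrightarrow> loss k M s m p \<le> \<alpha>) \<longrightarrow>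
        c * real k * ((\<epsilon> + \<delta>) + real m * \<alpha>)
          \<le> real s * real m * \<alpha>^2 * (\<epsilon> + \<delta>))"
proof (intro exI[of _ "1/10000 :: real"] conjI allI impI)
  show "(0::real) < 1/10000" by simp
  fix k m :: nat and \<alpha> \<epsilon> \<delta> :: real and M :: "nat \<Rightarrow> (nat \<Rightarrow> nat) \<Rightarrow> (nat \<Rightarrow> real) measure" and s :: nat
  let ?c = "1/10000 :: real"
  assume H: "2 \<le> k \<and> 1 \<le> m \<and> 0 < \<alpha> \<and> \<alpha> < ?c \<and> 0 \<le> \<epsilon> \<and> 0 \<le> \<delta> \<and> \<epsilon> + \<delta> < ?c \<and>
     valid_count_mechanism k M \<and> count_mechanism_dp k m M \<epsilon> \<delta>"
  assume L: "\<forall>p::nat pmf. set_pmf p \<subseteq> {..<k} \<longrightarrow> loss k M s m p \<le> \<alpha>"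
  define h where "h = k div 2"
  define \<gamma> where "\<gamma> = 32 * \<alpha>"
  define t where "t = \<epsilon> + \<delta>"
  have g0: "0 < \<gamma>" and g1: "\<gamma> \<le> 1" using H by (auto simp: \<gamma>_def)
  interpret setting k m s h \<gamma> \<epsilon> \<delta> M
    by unfold_locales (use H g0 g1 in \<open>auto simp: h_def\<close>)
  have lossb: "loss k M s m (PP h \<gamma> S) \<le> \<alpha>" if "S \<subseteq> {..<h}" for S
    using L setPP h2k by (meson lessThan_subset_iff order_trans)
  have notcond: "\<not> (real s * real m * \<gamma>^2 / h \<le> 1/2 \<or> (real s * \<gamma> / h + 1) * (exp \<epsilon> - 1 + \<delta>) \<le> 7/8)"
  proof
    assume "real s * real m * \<gamma>^2 / h \<le> 1/2 \<or> (real s * \<gamma> / h + 1) * (exp \<epsilon> - 1 + \<delta>) \<le> 7/8"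
    then have "\<gamma> / 16 \<le> \<alpha>" using lossb by (rule assouad)
    then show False using H by (simp add: \<gamma>_def)
  qed
  have hpos: "0 < real h" using h1 by simp
  have k2': "2 \<le> k" using H by blast
  have h3n: "k \<le> 3 * h" using k2' unfolding h_def by presburger
  have h3: "real k \<le> 3 * real h" using h3n by (metis of_nat_le_iff of_nat_mult of_nat_numeral)
  have t0: "0 \<le> t" "t < ?c" using H by (auto simp: t_def)
  have A: "real k < 6144 * (real s * real m * \<alpha>^2)"
  proof -
    have "1/2 < real s * real m * \<gamma>^2 / h" using notcond by simp
    then have "real h < 2 * (real s * real m * \<gamma>^2)" using hpos by (simp add: field_simps)
    also have "\<dots> = 2048 * (real s * real m * \<alpha>^2)" by (simp add: \<gamma>_def power2_eq_square)
    finally show ?thesis using h3 by linarith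
  qed
  have eb: "exp \<epsilon> \<le> 1 + 2 * \<epsilon>" using H by (intro real_exp_bound_lemma) auto
  have B: "real k < 384 * (real s * \<alpha> * t)"
  proof -
    have "7/8 < (real s * \<gamma> / h + 1) * (exp \<epsilon> - 1 + \<delta>)" using notcond by simp
    also have "\<dots> \<le> (real s * \<gamma> / h + 1) * (2 * t)"
    proof (rule mult_left_mono)
      show "exp \<epsilon> - 1 + \<delta> \<le> 2 * t" using eb H by (simp add: t_def)
      show "0 \<le> real s * \<gamma> / h + 1" using g0 hpos by simp
    qed
    also have "\<dots> = 2 * (real s * \<gamma> * t / h) + 2 * t" by (simp add: field_simps)
    finally have "7/8 - 2 * t < 2 * (real s * \<gamma> * t / h)" by linarith
    then have "1/4 < real s * \<gamma> * t / h" using t0 by linarith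
    then have "real h < 4 * (real s * \<gamma> * t)" using hpos by (simp add: field_simps)
    also have "\<dots> = 128 * (real s * \<alpha> * t)" by (simp add: \<gamma>_def)
    finally show ?thesis using h3 by linarith
  qed
  have X: "real s * real m * \<alpha>^2 * t \<ge> 0" using t0 H by simp
  have P1: "?c * real k * t \<le> ?c * 6144 * (real s * real m * \<alpha>^2 * t)"
  proof -
    have "real k * t \<le> 6144 * (real s * real m * \<alpha>^2) * t" using A t0 by (intro mult_right_mono) auto
    then show ?thesis by (simp add: algebra_simps)
  qed
  have P2: "?c * real k * (real m * \<alpha>) \<le> ?c * 384 * (real s * real m * \<alpha>^2 * t)"
  proof -
    have "real k * (real m * \<alpha>) \<le> 384 * (real s * \<alpha> * t) * (real m * \<alpha>)" using B H by (intro mult_right_mono) auto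
    then show ?thesis by (simp add: algebra_simps power2_eq_square)
  qed
  have "?c * real k * (t + real m * \<alpha>) \<le> ?c * 6528 * (real s * real m * \<alpha>^2 * t)"
    using P1 P2 by (simp add: algebra_simps)
  also have "\<dots> \<le> real s * real m * \<alpha>^2 * t" using X by linarith
  finally show "?c * real k * ((\<epsilon> + \<delta>) + real m * \<alpha>) \<le> real s * real m * \<alpha>^2 * (\<epsilon> + \<delta>)"
    by (simp add: t_def)
qed

end
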